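(* Let $(M_t)_{t=0}^n$ be a square-integrable martingale adapted to a filtration $(\mathcal F_t)_{t=0}^n$ with $M_0=0$. Then for all $x,\beta>0$ and $\alpha\ge0$, $$P\Big(\bigcup_{t=1}^n\big\{M_t\ge x\ \text{and}\ \langle M\rangle_t+[M]_t\le\alpha M_t+\beta\big\}\Big)\le\exp\Big(-\min\Big\{\frac{x^2}{8\beta},\frac{x}{6\alpha}\Big\}\Big),$$ with the convention $x/(6\alpha)=+\infty$ when $\alpha=0$.
   Context: For $t\ge1$, $\langle M\rangle_t=\sum_{i=1}^t\mathbb E[(M_i-M_{i-1})^2\mid\mathcal F_{i-1}]$ (total conditional variance) and $[M]_t=\sum_{i=1}^t(M_i-M_{i-1})^2$ (total quadratic variation). *)

theory Defs
  imports "HOL-Probability.Probability"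
begin

definition sq_int_martingale ::
  "'a measure \<Rightarrow> (nat \<Rightarrow> 'a measure) \<Rightarrow> nat \<Rightarrow> (nat \<Rightarrow> 'a \<Rightarrow> real) \<Rightarrow> bool" where
  "sq_int_martingale P F n X \<longleftrightarrow>
     (\<forall>t\<le>n. subalgebra P (F t)) \<and>
     (\<forall>s t. s \<le> t \<longrightarrow> t \<le> n \<longrightarrow> sets (F s) \<subseteq> sets (F t)) \<and>
     (\<forall>t\<le>n. X t \<in> borel_measurable (F t)) \<and>
     (\<forall>t\<le>n. integrable P (X t)) \<and>
     (\<forall>t\<le>n. integrable P (\<lambda>\<omega>. (X t \<omega>)\<^sup>2)) \<and>
     (\<forall>t<n. AE \<omega> in P. real_cond_exp P (F t) (X (Suc t)) \<omega> = X t \<omega>)"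

definition cond_var ::
  "'a measure \<Rightarrow> (nat \<Rightarrow> 'a measure) \<Rightarrow> (nat \<Rightarrow> 'a \<Rightarrow> real) \<Rightarrow> nat \<Rightarrow> 'a \<Rightarrow> real" where
  "cond_var P F X t \<omega> =
     (\<Sum>i\<in>{1..t}. real_cond_exp P (F (i - 1)) (\<lambda>\<eta>. (X i \<eta> - X (i - 1) \<eta>)\<^sup>2) \<omega>)"

definition quad_var :: "(nat \<Rightarrow> 'a \<Rightarrow> real) \<Rightarrow> nat \<Rightarrow> 'a \<Rightarrow> real" where
  "quad_var X t \<omega> = (\<Sum>i\<in>{1..t}. (X i \<omega> - X (i - 1) \<omega>)\<^sup>2)"

end

theory Submission
  imports Defs
begin

lemma bt_ineq:
  fixes y :: real
  shows "exp (y - y\<^sup>2 / 2) \<le> 1 + y + y\<^sup>2 / 2"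
proof -
  define h where "h = (\<lambda>y::real. (1 + y + y\<^sup>2 / 2) * exp (y\<^sup>2 / 2 - y))"
  have D: "DERIV h z :> exp (z\<^sup>2 / 2 - z) * (z * (1 + z / 2 + z\<^sup>2 / 2))" for z
  proof -
    have "DERIV h z :> (1 + z) * exp (z\<^sup>2 / 2 - z) + (1 + z + z\<^sup>2 / 2) * (exp (z\<^sup>2 / 2 - z) * (z - 1))"
      unfolding h_def
      by (auto intro!: derivative_eq_intros simp: power2_eq_square field_simps)
    moreover have "(1 + z) * exp (z\<^sup>2 / 2 - z) + (1 + z + z\<^sup>2 / 2) * (exp (z\<^sup>2 / 2 - z) * (z - 1))
        = exp (z\<^sup>2 / 2 - z) * (z * (1 + z / 2 + z\<^sup>2 / 2))"
      by (simp add: algebra_simps power2_eq_square)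
    ultimately show ?thesis by simp
  qed
  have q: "1 + z / 2 + z\<^sup>2 / 2 > 0" for z :: real
  proof -
    have "(z + 1/2)\<^sup>2 \<ge> 0" by simp
    then show ?thesis by (simp add: power2_eq_square algebra_simps)
  qed
  have "h y \<ge> h 0"
  proof (cases "y \<ge> 0")
    case True
    show ?thesis
      apply (rule DERIV_nonneg_imp_nondecreasing[OF True])
      using D q by (metis less_eq_real_def mult_nonneg_nonneg exp_ge_zero)
  next
    case False
    show ?thesis
      apply (rule DERIV_nonpos_imp_nonincreasing[of y 0])
      using False apply simp
      using D q by (metis exp_ge_zero less_eq_real_def mult_nonneg_nonpos mult_nonpos_nonneg)
  qed
  hence "(1 + y + y\<^sup>2 / 2) * exp (y\<^sup>2 / 2 - y) \<ge> 1" by (simp add: h_def)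
  moreover have "exp (y - y\<^sup>2 / 2) * exp (y\<^sup>2 / 2 - y) = 1" by (simp add: exp_add[symmetric])
  ultimately show ?thesis
    by (metis exp_gt_zero mult_le_cancel_right_pos mult_le_cancel_right1 order.strict_iff_not)
qed

locale mgs = prob_space M for M :: "'a measure" +
  fixes F :: "nat \<Rightarrow> 'a measure" and n :: nat and X :: "nat \<Rightarrow> 'a \<Rightarrow> real"
  assumes mg: "sq_int_martingale M F n X"
    and X0: "\<forall>\<omega>\<in>space M. X 0 \<omega> = 0"
begin

lemma subalg: "t \<le> n \<Longrightarrow> subalgebra M (F t)"
  using mg unfolding sq_int_martingale_def by auto

lemma sfs: "t \<le> n \<Longrightarrow> sigma_finite_subalgebra M (F t)"
  apply (rule finite_measure_subalgebra_is_sigma_finite)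
  apply (simp add: finite_measure_subalgebra_def finite_measure_subalgebra_axioms_def subalg finite_measure_axioms)
  done

lemma space_F: "t \<le> n \<Longrightarrow> space (F t) = space M"
  using subalg unfolding subalgebra_def by auto

lemma meas_mono:
  assumes "s \<le> t" "t \<le> n" "f \<in> borel_measurable (F s)"
  shows "f \<in> borel_measurable (F t)"
proof (rule measurable_from_subalg[OF _ assms(3)])
  show "subalgebra (F t) (F s)"
    using mg assms space_F[of s] space_F[of t] unfolding sq_int_martingale_def subalgebra_def by auto
qed

lemma meas_M: "t \<le> n \<Longrightarrow> f \<in> borel_measurable (F t) \<Longrightarrow> f \<in> borel_measurable M"
  using measurable_from_subalg subalg by blast

lemma X_F: "t \<le> n \<Longrightarrow> X t \<in> borel_measurable (F t)"
  using mg unfolding sq_int_martingale_def by auto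

lemma X_Fm: "s \<le> t \<Longrightarrow> t \<le> n \<Longrightarrow> X s \<in> borel_measurable (F t)"
  using X_F[of s] meas_mono[of s t] by auto

lemma X_M: "t \<le> n \<Longrightarrow> X t \<in> borel_measurable M"
  using X_F meas_M by auto

lemma X_int: "t \<le> n \<Longrightarrow> integrable M (X t)"
  using mg unfolding sq_int_martingale_def by auto

lemma X2_int: "t \<le> n \<Longrightarrow> integrable M (\<lambda>\<omega>. (X t \<omega>)\<^sup>2)"
  using mg unfolding sq_int_martingale_def by auto

lemma mart: "t < n \<Longrightarrow> AE \<omega> in M. real_cond_exp M (F t) (X (Suc t)) \<omega> = X t \<omega>"
  using mg unfolding sq_int_martingale_def by auto

lemma quad_var_0: "quad_var X 0 \<omega> = 0"
  by (simp add: quad_var_def)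

lemma cond_var_0: "cond_var M F X 0 \<omega> = 0"
  by (simp add: cond_var_def)

lemma quad_var_Suc: "quad_var X (Suc t) \<omega> = quad_var X t \<omega> + (X (Suc t) \<omega> - X t \<omega>)\<^sup>2"
  by (simp add: quad_var_def)

lemma cond_var_Suc: "cond_var M F X (Suc t) \<omega> = cond_var M F X t \<omega>
   + real_cond_exp M (F t) (\<lambda>\<eta>. (X (Suc t) \<eta> - X t \<eta>)\<^sup>2) \<omega>"
  by (simp add: cond_var_def)

lemma quad_var_F: "t \<le> n \<Longrightarrow> quad_var X t \<in> borel_measurable (F t)"
proof (induction t)
  case 0 then show ?case by (simp add: quad_var_0)
next
  case (Suc t)
  have a: "quad_var X t \<in> borel_measurable (F (Suc t))"
    using Suc meas_mono[of t "Suc t"] by auto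
  have b: "X t \<in> borel_measurable (F (Suc t))" "X (Suc t) \<in> borel_measurable (F (Suc t))"
    using Suc X_Fm by auto
  show ?case unfolding quad_var_Suc using a b by measurable
qed

lemma cond_var_F: "t \<le> n \<Longrightarrow> cond_var M F X t \<in> borel_measurable (F t)"
proof (induction t)
  case 0 then show ?case by (simp add: cond_var_0)
next
  case (Suc t)
  have a: "cond_var M F X t \<in> borel_measurable (F (Suc t))"
    using Suc meas_mono[of t "Suc t"] by auto
  have b: "real_cond_exp M (F t) (\<lambda>\<eta>. (X (Suc t) \<eta> - X t \<eta>)\<^sup>2) \<in> borel_measurable (F (Suc t))"
    using Suc by (intro meas_mono[of t "Suc t"] borel_measurable_cond_exp) auto
  show ?case unfolding cond_var_Suc using a b by measurable
qed

lemma D2_M: "Suc t \<le> n \<Longrightarrow> (\<lambda>\<eta>. (X (Suc t) \<eta> - X t \<eta>)\<^sup>2) \<in> borel_measurable M"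
  using X_M[of t] X_M[of "Suc t"] by measurable

lemma cond_var_nonneg: "t \<le> n \<Longrightarrow> AE \<omega> in M. cond_var M F X t \<omega> \<ge> 0"
proof (induction t)
  case 0 then show ?case by (simp add: cond_var_0)
next
  case (Suc t)
  have "AE \<omega> in M. real_cond_exp M (F t) (\<lambda>\<eta>. (X (Suc t) \<eta> - X t \<eta>)\<^sup>2) \<omega> \<ge> 0"
    using sigma_finite_subalgebra.real_cond_exp_pos[OF sfs[of t] _ D2_M] Suc by auto
  with Suc show ?case unfolding cond_var_Suc by auto
qed


lemma int_bdd_mult:
  fixes f g :: "'a \<Rightarrow> real"
  assumes "integrable M f" "g \<in> borel_measurable M" "AE \<omega> in M. \<bar>g \<omega>\<bar> \<le> K"
  shows "integrable M (\<lambda>\<omega>. g \<omega> * f \<omega>)"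
proof (rule Bochner_Integration.integrable_bound[where f="\<lambda>\<omega>. K * f \<omega>"])
  show "integrable M (\<lambda>\<omega>. K * f \<omega>)" using assms(1) by simp
  show "(\<lambda>\<omega>. g \<omega> * f \<omega>) \<in> borel_measurable M" using assms(1,2) by measurable
  show "AE \<omega> in M. norm (g \<omega> * f \<omega>) \<le> norm (K * f \<omega>)"
    using assms(3)
  proof eventually_elim
    case (elim \<omega>)
    then have "K \<ge> 0" by linarith
    then show ?case using elim by (simp add: abs_mult mult_right_mono)
  qed
qed

lemma int_bdd:
  fixes g :: "'a \<Rightarrow> real"
  assumes "g \<in> borel_measurable M" "AE \<omega> in M. \<bar>g \<omega>\<bar> \<le> K"
  shows "integrable M g"
  using int_bdd_mult[of "\<lambda>_. 1" g K] assms by simp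

definition W :: "real \<Rightarrow> nat \<Rightarrow> 'a \<Rightarrow> real" where
  "W l t \<omega> = exp (l * X t \<omega> - l\<^sup>2 / 2 * (cond_var M F X t \<omega> + quad_var X t \<omega>))"

lemma W_F: "t \<le> n \<Longrightarrow> W l t \<in> borel_measurable (F t)"
  unfolding W_def using X_F[of t] cond_var_F[of t] quad_var_F[of t] by measurable

lemma W_M: "t \<le> n \<Longrightarrow> W l t \<in> borel_measurable M"
  using W_F meas_M by blast

lemma W_pos: "W l t \<omega> > 0"
  by (simp add: W_def)

lemma W_0: "\<omega> \<in> space M \<Longrightarrow> W l 0 \<omega> = 1"
  using X0 by (simp add: W_def cond_var_0 quad_var_0)

lemma core_bound: "\<omega> \<in> space M \<Longrightarrow> l * X t \<omega> - l\<^sup>2 / 2 * quad_var X t \<omega> \<le> real t / 2"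
proof (induction t)
  case 0 then show ?case using X0 by (simp add: quad_var_0)
next
  case (Suc t)
  define y where "y = l * (X (Suc t) \<omega> - X t \<omega>)"
  have "y - y\<^sup>2 / 2 \<le> 1 / 2"
  proof -
    have "(y - 1)\<^sup>2 \<ge> 0" by simp
    then show ?thesis by (simp add: power2_eq_square algebra_simps)
  qed
  moreover have "l * X (Suc t) \<omega> - l\<^sup>2 / 2 * quad_var X (Suc t) \<omega>
     = (l * X t \<omega> - l\<^sup>2 / 2 * quad_var X t \<omega>) + (y - y\<^sup>2 / 2)"
    unfolding quad_var_Suc y_def power2_eq_square by (simp add: field_simps)
  ultimately show ?case using Suc by simp
qed

lemma W_bound: assumes "t \<le> n" shows "AE \<omega> in M. \<bar>W l t \<omega>\<bar> \<le> exp (real t / 2)"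
  using cond_var_nonneg[OF assms] AE_space
proof eventually_elim
  case (elim \<omega>)
  have "l * X t \<omega> - l\<^sup>2 / 2 * (cond_var M F X t \<omega> + quad_var X t \<omega>)
     \<le> l * X t \<omega> - l\<^sup>2 / 2 * quad_var X t \<omega>"
    using elim by (simp add: algebra_simps)
  also have "\<dots> \<le> real t / 2" using core_bound elim by blast
  finally show ?case using W_pos[of l t \<omega>] by (simp add: W_def)
qed

lemma W_int: "t \<le> n \<Longrightarrow> integrable M (W l t)"
  using int_bdd[OF W_M W_bound] by blast

lemma W_Suc: "W l (Suc t) \<omega> = W l t \<omega> * exp (l * (X (Suc t) \<omega> - X t \<omega>) - (l * (X (Suc t) \<omega> - X t \<omega>))\<^sup>2 / 2)
   * exp (- (l\<^sup>2 / 2) * real_cond_exp M (F t) (\<lambda>\<eta>. (X (Suc t) \<eta> - X t \<eta>)\<^sup>2) \<omega>)"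
  unfolding W_def cond_var_Suc quad_var_Suc mult_exp_exp
  by (rule arg_cong[where f=exp]) (simp add: field_simps power2_eq_square)


lemma W_step:
  assumes sn: "s < n" and B: "B \<in> sets (F s)"
  shows "(\<integral>\<omega>. W l (Suc s) \<omega> * indicator B \<omega> \<partial>M) \<le> (\<integral>\<omega>. W l s \<omega> * indicator B \<omega> \<partial>M)"
proof -
  define D where "D = (\<lambda>\<omega>. X (Suc s) \<omega> - X s \<omega>)"
  define C where "C = real_cond_exp M (F s) (\<lambda>\<eta>. (D \<eta>)\<^sup>2)"
  define G where "G = (\<lambda>\<omega>. W l s \<omega> * indicator B \<omega> * exp (- (l\<^sup>2 / 2) * C \<omega>))"
  define E where "E = (\<lambda>\<omega>. exp (l * D \<omega> - (l * D \<omega>)\<^sup>2 / 2))"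
  interpret S: sigma_finite_subalgebra M "F s" using sfs sn by simp
  have s1: "s \<le> n" "Suc s \<le> n" using sn by auto
  have C_F: "C \<in> borel_measurable (F s)" unfolding C_def by (rule borel_measurable_cond_exp)
  have WF: "W l s \<in> borel_measurable (F s)" using W_F s1 by blast
  have G_F: "G \<in> borel_measurable (F s)" unfolding G_def using C_F WF B by measurable
  have G_M: "G \<in> borel_measurable M" using meas_M[OF s1(1) G_F] .
  have XM: "X s \<in> borel_measurable M" "X (Suc s) \<in> borel_measurable M" using X_M s1 by auto
  have D_M: "D \<in> borel_measurable M" unfolding D_def using XM by measurable
  have D2_M: "(\<lambda>\<eta>. (D \<eta>)\<^sup>2) \<in> borel_measurable M" using D_M by measurable
  have C_nn: "AE \<omega> in M. C \<omega> \<ge> 0" unfolding C_def by (rule S.real_cond_exp_pos[OF _ D2_M]) simp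
  have G_nn: "G \<omega> \<ge> 0" for \<omega> unfolding G_def using W_pos[of l s \<omega>] by simp
  have G_bd: "AE \<omega> in M. \<bar>G \<omega>\<bar> \<le> exp (real s / 2)"
    using C_nn W_bound[OF s1(1), of l]
  proof eventually_elim
    case (elim \<omega>)
    have "exp (- (l\<^sup>2 / 2) * C \<omega>) \<le> 1" using elim by simp
    moreover have "indicator B \<omega> \<le> (1::real)" by (simp add: indicator_def)
    moreover have "0 \<le> W l s \<omega>" using W_pos[of l s \<omega>] by simp
    ultimately have "W l s \<omega> * indicator B \<omega> * exp (- (l\<^sup>2 / 2) * C \<omega>) \<le> W l s \<omega> * indicator B \<omega> * 1"
      and "W l s \<omega> * indicator B \<omega> \<le> W l s \<omega> * 1"
      by (intro mult_left_mono; simp)+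
    then have "G \<omega> \<le> W l s \<omega>" unfolding G_def by linarith
    then show ?case using G_nn[of \<omega>] elim by simp
  qed
  have G_int: "integrable M G" by (rule int_bdd[OF G_M G_bd])
  have D_int: "integrable M D" unfolding D_def using X_int s1 by auto
  have D2_int: "integrable M (\<lambda>\<eta>. (D \<eta>)\<^sup>2)"
  proof (rule Bochner_Integration.integrable_bound[where f="\<lambda>\<omega>. 2 * (X (Suc s) \<omega>)\<^sup>2 + 2 * (X s \<omega>)\<^sup>2"])
    show "integrable M (\<lambda>\<omega>. 2 * (X (Suc s) \<omega>)\<^sup>2 + 2 * (X s \<omega>)\<^sup>2)" using X2_int s1 by auto
    show "(\<lambda>\<eta>. (D \<eta>)\<^sup>2) \<in> borel_measurable M" by (rule D2_M)
    show "AE \<omega> in M. norm ((D \<omega>)\<^sup>2) \<le> norm (2 * (X (Suc s) \<omega>)\<^sup>2 + 2 * (X s \<omega>)\<^sup>2)"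
    proof (intro AE_I2)
      fix \<omega>
      have a: "(X (Suc s) \<omega> + X s \<omega>)\<^sup>2 \<ge> 0" by simp
      have b: "(D \<omega>)\<^sup>2 + (X (Suc s) \<omega> + X s \<omega>)\<^sup>2 = 2 * (X (Suc s) \<omega>)\<^sup>2 + 2 * (X s \<omega>)\<^sup>2"
        unfolding D_def by (simp add: power2_eq_square algebra_simps)
      have c: "norm ((D \<omega>)\<^sup>2) = (D \<omega>)\<^sup>2" by simp
      have d: "2 * (X (Suc s) \<omega>)\<^sup>2 + 2 * (X s \<omega>)\<^sup>2 \<le> norm (2 * (X (Suc s) \<omega>)\<^sup>2 + 2 * (X s \<omega>)\<^sup>2)"
        by simp
      show "norm ((D \<omega>)\<^sup>2) \<le> norm (2 * (X (Suc s) \<omega>)\<^sup>2 + 2 * (X s \<omega>)\<^sup>2)"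
        using a b c d by linarith
    qed
  qed
  have C_int: "integrable M C" unfolding C_def by (rule S.real_cond_exp_int(1)[OF D2_int])
  have GD_int: "integrable M (\<lambda>\<omega>. G \<omega> * D \<omega>)" by (rule int_bdd_mult[OF D_int G_M G_bd])
  have GD2_int: "integrable M (\<lambda>\<omega>. G \<omega> * (D \<omega>)\<^sup>2)" by (rule int_bdd_mult[OF D2_int G_M G_bd])
  have GC_int: "integrable M (\<lambda>\<omega>. G \<omega> * C \<omega>)" by (rule int_bdd_mult[OF C_int G_M G_bd])
  have GX1_int: "integrable M (\<lambda>\<omega>. G \<omega> * X (Suc s) \<omega>)" by (rule int_bdd_mult[OF X_int[OF s1(2)] G_M G_bd])
  have GX0_int: "integrable M (\<lambda>\<omega>. G \<omega> * X s \<omega>)" by (rule int_bdd_mult[OF X_int[OF s1(1)] G_M G_bd])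
  have ind_bd: "AE \<omega> in M. \<bar>indicator B \<omega> :: real\<bar> \<le> 1" by (simp add: indicator_def)
  have B_M: "B \<in> sets M" using subalg[OF s1(1)] B unfolding subalgebra_def by auto
  have WB1_int: "integrable M (\<lambda>\<omega>. indicator B \<omega> * W l (Suc s) \<omega>)"
    by (rule int_bdd_mult[OF W_int[OF s1(2)] _ ind_bd]) (use B_M in measurable)
  have eq1: "W l (Suc s) \<omega> * indicator B \<omega> = G \<omega> * E \<omega>" for \<omega>
    unfolding G_def E_def W_Suc[of l s \<omega>] C_def D_def by simp
  have GE_int: "integrable M (\<lambda>\<omega>. G \<omega> * E \<omega>)"
  proof -
    have "(\<lambda>\<omega>. G \<omega> * E \<omega>) = (\<lambda>\<omega>. indicator B \<omega> * W l (Suc s) \<omega>)"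
      by (rule ext) (metis eq1 mult.commute)
    then show ?thesis using WB1_int by simp
  qed
  have "(\<integral>\<omega>. W l (Suc s) \<omega> * indicator B \<omega> \<partial>M) = (\<integral>\<omega>. G \<omega> * E \<omega> \<partial>M)"
    by (simp add: eq1)
  also have "\<dots> \<le> (\<integral>\<omega>. G \<omega> + l * (G \<omega> * D \<omega>) + (l\<^sup>2 / 2) * (G \<omega> * (D \<omega>)\<^sup>2) \<partial>M)"
  proof (rule integral_mono[OF GE_int])
    show "integrable M (\<lambda>\<omega>. G \<omega> + l * (G \<omega> * D \<omega>) + (l\<^sup>2 / 2) * (G \<omega> * (D \<omega>)\<^sup>2))"
      using G_int GD_int GD2_int by auto
    fix \<omega>
    have "E \<omega> \<le> 1 + l * D \<omega> + (l * D \<omega>)\<^sup>2 / 2" unfolding E_def by (rule bt_ineq)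
    then have "G \<omega> * E \<omega> \<le> G \<omega> * (1 + l * D \<omega> + (l * D \<omega>)\<^sup>2 / 2)"
      using G_nn[of \<omega>] by (intro mult_left_mono)
    then show "G \<omega> * E \<omega> \<le> G \<omega> + l * (G \<omega> * D \<omega>) + (l\<^sup>2 / 2) * (G \<omega> * (D \<omega>)\<^sup>2)"
      by (simp add: algebra_simps power2_eq_square)
  qed
  also have "\<dots> = (\<integral>\<omega>. G \<omega> \<partial>M) + l * (\<integral>\<omega>. G \<omega> * D \<omega> \<partial>M) + (l\<^sup>2 / 2) * (\<integral>\<omega>. G \<omega> * (D \<omega>)\<^sup>2 \<partial>M)"
    using G_int GD_int GD2_int by simp
  also have "(\<integral>\<omega>. G \<omega> * D \<omega> \<partial>M) = 0"
  proof -
    have "(\<integral>\<omega>. G \<omega> * X (Suc s) \<omega> \<partial>M) = (\<integral>\<omega>. G \<omega> * real_cond_exp M (F s) (X (Suc s)) \<omega> \<partial>M)"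
      using S.real_cond_exp_intg(2)[OF GX1_int G_F XM(2)] by simp
    also have "\<dots> = (\<integral>\<omega>. G \<omega> * X s \<omega> \<partial>M)"
      using mart[OF sn] G_M XM by (intro integral_cong_AE) (auto elim!: eventually_mono)
    finally show ?thesis unfolding D_def using GX1_int GX0_int by (simp add: right_diff_distrib)
  qed
  also have "(\<integral>\<omega>. G \<omega> * (D \<omega>)\<^sup>2 \<partial>M) = (\<integral>\<omega>. G \<omega> * C \<omega> \<partial>M)"
    unfolding C_def using S.real_cond_exp_intg(2)[OF GD2_int G_F D2_M] by simp
  also have "(\<integral>\<omega>. G \<omega> \<partial>M) + l * 0 + (l\<^sup>2 / 2) * (\<integral>\<omega>. G \<omega> * C \<omega> \<partial>M)
      = (\<integral>\<omega>. G \<omega> + (l\<^sup>2 / 2) * (G \<omega> * C \<omega>) \<partial>M)"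
    using G_int GC_int by simp
  also have "\<dots> \<le> (\<integral>\<omega>. W l s \<omega> * indicator B \<omega> \<partial>M)"
  proof (rule integral_mono)
    show "integrable M (\<lambda>\<omega>. G \<omega> + (l\<^sup>2 / 2) * (G \<omega> * C \<omega>))" using G_int GC_int by auto
    show "integrable M (\<lambda>\<omega>. W l s \<omega> * indicator B \<omega>)"
      using int_bdd_mult[OF W_int[OF s1(1)] _ ind_bd] B_M by (simp add: mult.commute)
    fix \<omega>
    define u where "u = (l\<^sup>2 / 2) * C \<omega>"
    have "exp (- u) * (1 + u) \<le> exp (- u) * exp u"
      by (rule mult_left_mono) auto
    also have "\<dots> = 1" by (simp add: exp_add[symmetric])
    finally have "exp (- u) * (1 + u) \<le> 1" .
    moreover have "0 \<le> W l s \<omega> * indicator B \<omega>" using W_pos[of l s \<omega>] by simp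
    ultimately have "W l s \<omega> * indicator B \<omega> * (exp (- u) * (1 + u)) \<le> W l s \<omega> * indicator B \<omega>"
      using mult_left_le by blast
    then show "G \<omega> + (l\<^sup>2 / 2) * (G \<omega> * C \<omega>) \<le> W l s \<omega> * indicator B \<omega>"
      unfolding G_def u_def by (simp add: algebra_simps)
  qed
  finally show ?thesis .
qed


lemma W_ind_int: "k \<le> n \<Longrightarrow> A \<in> sets M \<Longrightarrow> integrable M (\<lambda>\<omega>. W l k \<omega> * indicator A \<omega>)"
  using int_bdd_mult[OF W_int[of k l], of "indicator A" 1] by (simp add: mult.commute indicator_def)

definition Dset :: "real \<Rightarrow> real \<Rightarrow> nat \<Rightarrow> 'a set" where
  "Dset l c k = {\<omega>\<in>space M. \<forall>t\<in>{..k}. W l t \<omega> < c}"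

lemma Dset_Suc: "Dset l c (Suc k) = Dset l c k \<inter> {\<omega>\<in>space M. W l (Suc k) \<omega> < c}"
  unfolding Dset_def by (auto simp: le_Suc_eq)

lemma Dset_F: "k \<le> n \<Longrightarrow> Dset l c k \<in> sets (F k)"
proof (induction k)
  case 0
  have "Dset l c 0 = {\<omega>\<in>space (F 0). W l 0 \<omega> < c}" unfolding Dset_def using space_F[of 0] by auto
  also have "\<dots> \<in> sets (F 0)" using W_F[of 0 l] by measurable
  finally show ?case .
next
  case (Suc k)
  have a0: "Dset l c k \<in> sets (F k)" using Suc by simp
  have "sets (F k) \<subseteq> sets (F (Suc k))" using Suc(2) mg unfolding sq_int_martingale_def by auto
  with a0 have a: "Dset l c k \<in> sets (F (Suc k))" by blast
  have b: "{\<omega>\<in>space (F (Suc k)). W l (Suc k) \<omega> < c} \<in> sets (F (Suc k))"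
    using W_F[OF Suc(2), of l] by measurable
  show ?case unfolding Dset_Suc using a b space_F[OF Suc(2)] by (metis sets.Int)
qed

lemma Dset_M: "k \<le> n \<Longrightarrow> Dset l c k \<in> sets M"
  using Dset_F subalg unfolding subalgebra_def by blast

lemma ville_inv:
  assumes c: "c > 1" and k: "k \<le> n"
  shows "c * (1 - prob (Dset l c k)) + (\<integral>\<omega>. W l k \<omega> * indicator (Dset l c k) \<omega> \<partial>M) \<le> 1"
  using k
proof (induction k)
  case 0
  have "Dset l c 0 = space M" unfolding Dset_def using W_0 c by auto
  moreover have "(\<integral>\<omega>. W l 0 \<omega> * indicator (space M) \<omega> \<partial>M) = (\<integral>\<omega>. 1 \<partial>M)"
    by (rule Bochner_Integration.integral_cong) (auto simp: W_0)
  ultimately show ?case by (simp add: prob_space)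
next
  case (Suc k)
  let ?D = "Dset l c k" and ?D' = "Dset l c (Suc k)"
  have kn: "k \<le> n" "k < n" using Suc by auto
  have DM: "?D \<in> sets M" "?D' \<in> sets M" using Dset_M Suc kn by auto
  have sub: "?D' \<subseteq> ?D" by (auto simp: Dset_Suc)
  have "(\<integral>\<omega>. W l (Suc k) \<omega> * indicator ?D' \<omega> \<partial>M) + c * (prob ?D - prob ?D')
      = (\<integral>\<omega>. W l (Suc k) \<omega> * indicator ?D' \<omega> + c * indicator (?D - ?D') \<omega> \<partial>M)"
  proof -
    have dd: "?D - ?D' \<in> sets M" using DM by auto
    have i1: "integrable M (indicator (?D - ?D') :: 'a \<Rightarrow> real)"
      using dd by (intro integrable_real_indicator) (auto simp: less_top[symmetric])
    have "(\<integral>\<omega>. c * indicator (?D - ?D') \<omega> \<partial>M) = c * prob (?D - ?D')"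
      using dd by simp
    also have "prob (?D - ?D') = prob ?D - prob ?D'"
      using DM sub by (simp add: finite_measure_Diff)
    finally have e2: "(\<integral>\<omega>. c * indicator (?D - ?D') \<omega> \<partial>M) = c * (prob ?D - prob ?D')" .
    have e1: "(\<integral>\<omega>. W l (Suc k) \<omega> * indicator ?D' \<omega> + c * indicator (?D - ?D') \<omega> \<partial>M)
       = (\<integral>\<omega>. W l (Suc k) \<omega> * indicator ?D' \<omega> \<partial>M) + (\<integral>\<omega>. c * indicator (?D - ?D') \<omega> \<partial>M)"
      using W_ind_int[OF Suc(2) DM(2)] i1 by (intro Bochner_Integration.integral_add) auto
    show ?thesis using e1 e2 by linarith
  qed
  also have "\<dots> \<le> (\<integral>\<omega>. W l (Suc k) \<omega> * indicator ?D \<omega> \<partial>M)"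
  proof (rule integral_mono)
    show "integrable M (\<lambda>\<omega>. W l (Suc k) \<omega> * indicator ?D' \<omega> + c * indicator (?D - ?D') \<omega>)"
      using W_ind_int[OF Suc(2) DM(2)] DM by (auto simp: less_top[symmetric])
    show "integrable M (\<lambda>\<omega>. W l (Suc k) \<omega> * indicator ?D \<omega>)"
      using W_ind_int[OF Suc(2) DM(1)] .
    fix \<omega> assume "\<omega> \<in> space M"
    show "W l (Suc k) \<omega> * indicator ?D' \<omega> + c * indicator (?D - ?D') \<omega> \<le> W l (Suc k) \<omega> * indicator ?D \<omega>"
    proof (cases "\<omega> \<in> ?D'")
      case True then show ?thesis using sub by auto
    next
      case False
      show ?thesis
      proof (cases "\<omega> \<in> ?D")
        case True
        with False have "W l (Suc k) \<omega> \<ge> c" unfolding Dset_Suc by (auto simp: Dset_def)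
        then show ?thesis using True False by auto
      next
        case False2: False
        then show ?thesis using False by auto
      qed
    qed
  qed
  also have "\<dots> \<le> (\<integral>\<omega>. W l k \<omega> * indicator ?D \<omega> \<partial>M)"
    by (rule W_step[OF kn(2) Dset_F[OF kn(1)]])
  finally show ?case using Suc.IH[OF kn(1)] by (simp add: algebra_simps)
qed

lemma ville:
  assumes c: "c > 1"
  shows "prob {\<omega>\<in>space M. \<exists>t\<in>{..n}. W l t \<omega> \<ge> c} \<le> 1 / c"
proof -
  have eq: "{\<omega>\<in>space M. \<exists>t\<in>{..n}. W l t \<omega> \<ge> c} = space M - Dset l c n"
    unfolding Dset_def by (auto simp: not_less Ball_def Bex_def)
  have "(\<integral>\<omega>. W l n \<omega> * indicator (Dset l c n) \<omega> \<partial>M) \<ge> 0"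
    by (rule integral_nonneg_AE) (auto intro!: mult_nonneg_nonneg less_imp_le[OF W_pos])
  with ville_inv[OF c order.refl, of l] have "c * (1 - prob (Dset l c n)) \<le> 1" by linarith
  then have "1 - prob (Dset l c n) \<le> 1 / c" using c by (simp add: field_simps)
  then show ?thesis unfolding eq using prob_compl[OF Dset_M[OF order.refl]] by simp
qed


lemma final_bound:
  assumes x: "x > 0" and b: "\<beta> > 0" and a: "\<alpha> \<ge> 0"
  shows "prob {\<omega> \<in> space M. \<exists>t\<in>{1..n}. X t \<omega> \<ge> x \<and>
            cond_var M F X t \<omega> + quad_var X t \<omega> \<le> \<alpha> * X t \<omega> + \<beta>}
         \<le> exp (- (x\<^sup>2 / (2 * (\<alpha> * x + \<beta>))))"
proof -
  define s where "s = \<alpha> * x + \<beta>"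
  have s_pos: "s > 0" unfolding s_def using a x b by (simp add: add_nonneg_pos)
  define l where "l = x / s"
  define L where "L = x\<^sup>2 / (2 * s)"
  have l_pos: "l > 0" unfolding l_def using x s_pos by simp
  have la: "l * \<alpha> \<le> 1"
  proof -
    have "\<alpha> * x \<le> s" unfolding s_def using b by simp
    then show ?thesis unfolding l_def using s_pos by (simp add: field_simps)
  qed
  have k_nn: "l - l\<^sup>2 * \<alpha> / 2 \<ge> 0"
  proof -
    have "l * (l * \<alpha>) \<le> l * 1" using la l_pos by (intro mult_left_mono) auto
    then show ?thesis using l_pos by (simp add: power2_eq_square algebra_simps)
  qed
  have L_pos: "L > 0" unfolding L_def using x s_pos by simp
  define c where "c = exp L"
  have c1: "c > 1" unfolding c_def using L_pos by simp
  have sub: "{\<omega> \<in> space M. \<exists>t\<in>{1..n}. X t \<omega> \<ge> x \<and>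
            cond_var M F X t \<omega> + quad_var X t \<omega> \<le> \<alpha> * X t \<omega> + \<beta>}
      \<subseteq> {\<omega>\<in>space M. \<exists>t\<in>{..n}. W l t \<omega> \<ge> c}"
  proof safe
    fix \<omega> t assume om: "\<omega> \<in> space M" and t: "t \<in> {1..n}" and Xx: "X t \<omega> \<ge> x"
      and V: "cond_var M F X t \<omega> + quad_var X t \<omega> \<le> \<alpha> * X t \<omega> + \<beta>"
    define V where "V = cond_var M F X t \<omega> + quad_var X t \<omega>"
    define Y where "Y = X t \<omega>"
    have s1: "l\<^sup>2 / 2 * V \<le> l\<^sup>2 / 2 * (\<alpha> * Y + \<beta>)"
      using V unfolding V_def Y_def by (intro mult_left_mono) auto
    have s2: "(l - l\<^sup>2 * \<alpha> / 2) * x \<le> (l - l\<^sup>2 * \<alpha> / 2) * Y"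
      using Xx k_nn unfolding Y_def by (intro mult_left_mono) auto
    have i1: "l * Y - l\<^sup>2 / 2 * (\<alpha> * Y + \<beta>) = (l - l\<^sup>2 * \<alpha> / 2) * Y - l\<^sup>2 * \<beta> / 2"
      by (simp add: algebra_simps)
    have i2: "(l - l\<^sup>2 * \<alpha> / 2) * x - l\<^sup>2 * \<beta> / 2 = L"
    proof -
      have "(l - l\<^sup>2 * \<alpha> / 2) * x - l\<^sup>2 * \<beta> / 2 = l * x - l\<^sup>2 * s / 2"
        by (simp add: s_def algebra_simps)
      also have "\<dots> = L" unfolding l_def L_def using s_pos by (simp add: field_simps power2_eq_square)
      finally show ?thesis .
    qed
    have "L \<le> l * Y - l\<^sup>2 / 2 * V" using s1 s2 i1 i2 by linarith
    then have "c \<le> W l t \<omega>" unfolding c_def W_def V_def Y_def by simp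
    then show "\<exists>t\<in>{..n}. c \<le> W l t \<omega>" using t by auto
  qed
  have Aset: "{\<omega>\<in>space M. \<exists>t\<in>{..n}. W l t \<omega> \<ge> c} \<in> sets M"
  proof -
    have "{\<omega>\<in>space M. \<exists>t\<in>{..n}. W l t \<omega> \<ge> c} = space M - Dset l c n"
      unfolding Dset_def by (auto simp: not_less Ball_def Bex_def)
    then show ?thesis using Dset_M[of n l c] by auto
  qed
  have "prob {\<omega> \<in> space M. \<exists>t\<in>{1..n}. X t \<omega> \<ge> x \<and>
            cond_var M F X t \<omega> + quad_var X t \<omega> \<le> \<alpha> * X t \<omega> + \<beta>}
      \<le> prob {\<omega>\<in>space M. \<exists>t\<in>{..n}. W l t \<omega> \<ge> c}"
    by (rule finite_measure_mono[OF sub Aset])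
  also have "\<dots> \<le> 1 / c" by (rule ville[OF c1])
  also have "1 / c = exp (- L)" unfolding c_def by (simp add: exp_minus field_simps)
  finally show ?thesis unfolding L_def s_def .
qed

end

lemma exp_compare:
  fixes x \<alpha> \<beta> :: real
  assumes x: "x > 0" and b: "\<beta> > 0" and a: "\<alpha> \<ge> 0"
  shows "exp (- (x\<^sup>2 / (2 * (\<alpha> * x + \<beta>))))
     \<le> (if \<alpha> = 0 then exp (- (x\<^sup>2 / (8 * \<beta>)))
            else exp (- min (x\<^sup>2 / (8 * \<beta>)) (x / (6 * \<alpha>))))"
proof (cases "\<alpha> = 0")
  case True
  have "x\<^sup>2 / (8 * \<beta>) \<le> x\<^sup>2 / (2 * \<beta>)" using b by (intro divide_left_mono) auto
  then show ?thesis using True by simp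
next
  case False
  then have a0: "\<alpha> > 0" using a by simp
  have "min (x\<^sup>2 / (8 * \<beta>)) (x / (6 * \<alpha>)) \<le> x\<^sup>2 / (2 * (\<alpha> * x + \<beta>))"
  proof (cases "\<alpha> * x \<le> \<beta>")
    case True
    have "x\<^sup>2 / (8 * \<beta>) \<le> x\<^sup>2 / (2 * (\<alpha> * x + \<beta>))"
      using True b a0 x by (intro divide_left_mono) (auto intro!: mult_pos_pos add_pos_pos)
    then show ?thesis by linarith
  next
    case False
    have "x / (6 * \<alpha>) = x\<^sup>2 / (6 * (\<alpha> * x))" using x a0 by (simp add: power2_eq_square)
    also have "\<dots> \<le> x\<^sup>2 / (2 * (\<alpha> * x + \<beta>))"
      using False b a0 x by (intro divide_left_mono) (auto intro!: mult_pos_pos add_pos_pos)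
    finally show ?thesis by linarith
  qed
  then show ?thesis using False by simp
qed

theorem proposition1:
  fixes P :: "'a measure" and F :: "nat \<Rightarrow> 'a measure" and X :: "nat \<Rightarrow> 'a \<Rightarrow> real"
    and n :: nat and x \<alpha> \<beta> :: real
  assumes "prob_space P"
    and "sq_int_martingale P F n X"
    and "\<forall>\<omega>\<in>space P. X 0 \<omega> = 0"
    and "x > 0" and "\<beta> > 0" and "\<alpha> \<ge> 0"
  shows "measure P {\<omega> \<in> space P. \<exists>t\<in>{1..n}. X t \<omega> \<ge> x \<and>
            cond_var P F X t \<omega> + quad_var X t \<omega> \<le> \<alpha> * X t \<omega> + \<beta>}
         \<le> (if \<alpha> = 0 then exp (- (x\<^sup>2 / (8 * \<beta>)))
            else exp (- min (x\<^sup>2 / (8 * \<beta>)) (x / (6 * \<alpha>))))"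
proof -
  interpret mgs P F n X using assms(1-3) by (simp add: mgs_def mgs_axioms_def)
  show ?thesis using final_bound[OF assms(4-6)] exp_compare[OF assms(4-6)] by linarith
qed

end
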